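(* Let $N\ge1$, let $\Psi_N$ be the $N\times N$ lower triangular matrix $(\Psi_N)_{jk}=\binom{j}{k}$, $0\le j,k<N$, let $\Lambda_N=\mathrm{diag}(1,-1,1,\dots,(-1)^{N-1})$, and let $J_N$ be the $N\times N$ symmetric tridiagonal matrix with $(J_N)_{kk}=k(2k^2+3k+2-N^2)$ and $(J_N)_{k,k+1}=(J_N)_{k+1,k}=(k+1)(N^2-(k+1)^2)$. Set $B_N=-\Lambda_NJ_N\Lambda_N+(N^2-1)I_N$ and $S_N=\Psi_N^\intercal\Psi_N$, i.e. $(S_N)_{jk}=\sum_{i=0}^{N-1}\binom{i}{j}\binom{i}{k}$. Then $B_NS_N=S_NB_N$.
   Context: Matrix indices start at $0$; $I_N$ is the $N\times N$ identity matrix. *)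

theory Defs
  imports "Jordan_Normal_Form.Matrix"
begin

definition Psi :: "nat \<Rightarrow> int mat" where
  "Psi N = mat N N (\<lambda>(j,k). int (j choose k))"

definition Lambda :: "nat \<Rightarrow> int mat" where
  "Lambda N = mat N N (\<lambda>(j,k). if j = k then (-1) ^ j else 0)"

definition Jmat :: "nat \<Rightarrow> int mat" where
  "Jmat N = mat N N (\<lambda>(j,k).
     if j = k then int k * (2 * int k ^ 2 + 3 * int k + 2 - int N ^ 2)
     else if k = j + 1 then int (j+1) * (int N ^ 2 - int (j+1) ^ 2)
     else if j = k + 1 then int (k+1) * (int N ^ 2 - int (k+1) ^ 2)
     else 0)"

definition Bmat :: "nat \<Rightarrow> int mat" where
  "Bmat N = - (Lambda N * Jmat N * Lambda N) + of_int (int N ^ 2 - 1) \<cdot>\<^sub>m 1\<^sub>m N"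

definition Smat :: "nat \<Rightarrow> int mat" where
  "Smat N = (Psi N)\<^sup>T * Psi N"

end

theory Submission
  imports Defs
begin

definition aa :: "nat \<Rightarrow> nat \<Rightarrow> int" where "aa N m = int m * (int N ^ 2 - int m ^ 2)"
definition tt :: "nat \<Rightarrow> nat \<Rightarrow> int" where
  "tt N k = int k * (2 * int k ^ 2 + 3 * int k + 2 - int N ^ 2)"

definition tri :: "int \<Rightarrow> int \<Rightarrow> int \<Rightarrow> nat \<Rightarrow> nat \<Rightarrow> int" where
  "tri lo d hi l k = (if l = k then d else 0) + (if l = k + 1 then hi else 0)
     + (if l + 1 = k then lo else 0)"

lemma sum_tri:
  assumes "k < N"
  shows "(\<Sum>l<N. f l * tri lo d hi l k) = f k * d + (if k + 1 < N then f (k+1) * hi else 0)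
     + (if 0 < k then f (k - 1) * lo else 0)"
proof -
  have "(\<Sum>l<N. f l * tri lo d hi l k) = (\<Sum>l<N. (if l = k then f l * d else 0))
     + (\<Sum>l<N. (if l = k + 1 then f l * hi else 0)) + (\<Sum>l<N. (if 0 < k \<and> l = k - 1 then f l * lo else 0))"
  proof -
    have "\<And>l. f l * tri lo d hi l k = (if l = k then f l * d else 0) + (if l = k + 1 then f l * hi else 0)
      + (if 0 < k \<and> l = k - 1 then f l * lo else 0)"
      by (auto simp: tri_def distrib_left)
    then show ?thesis by (simp add: sum.distrib)
  qed
  also have "\<dots> = f k * d + (if k + 1 < N then f (k+1) * hi else 0)
     + (if 0 < k then f (k - 1) * lo else 0)"
    using assms by (cases k) (auto simp: sum.delta)
  finally show ?thesis .
qed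

lemma alg:
  fixes j k n u v w x y :: int
  assumes "(k+1)*w = (j-k)*v" "j*x = (j-k)*v" "y = v+u" "k*v = (j+1-k)*u"
  shows "k*(n^2-k^2)*u + (n^2-1-k*(2*k^2+3*k+2-n^2))*v + (k+1)*(n^2-(k+1)^2)*w
   = j*(n^2-j^2)*x + j*(2*j^2+3*j+2-n^2)*v + (j+1)*(n^2-(j+1)^2)*y"
proof -
  have e: "k*(n^2-k^2)*u + (n^2-1-k*(2*k^2+3*k+2-n^2))*v + (k+1)*(n^2-(k+1)^2)*w
   - (j*(n^2-j^2)*x + j*(2*j^2+3*j+2-n^2)*v + (j+1)*(n^2-(j+1)^2)*y)
   = (n^2-(k+1)^2)*((k+1)*w-(j-k)*v)-(n^2-j^2)*(j*x-(j-k)*v)-(j+1)*(n^2-(j+1)^2)*(y-v-u)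
     - ((j+1)^2+(j+1)*k+k^2-n^2)*(k*v-(j+1-k)*u)"
    by (simp add: algebra_simps power2_eq_square power3_eq_cube)
  show ?thesis using e assms by simp
qed

lemma F1: "int (Suc k) * int (j choose Suc k) = (int j - int k) * int (j choose k)"
proof (cases "k \<le> j")
  case True
  have "Suc k * (j choose Suc k) = (j - k) * (j choose k)"
    using binomial_absorption binomial_absorb_comp by metis
  then have "int (Suc k * (j choose Suc k)) = int ((j - k) * (j choose k))" by simp
  then show ?thesis using True by (simp add: of_nat_diff algebra_simps)
next
  case False then show ?thesis by (simp add: binomial_eq_0)
qed

lemma F2: "int j * int ((j - 1) choose k) = (int j - int k) * int (j choose k)"
proof (cases "k \<le> j")
  case True
  have "j * ((j - 1) choose k) = (j - k) * (j choose k)"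
    using binomial_absorb_comp by metis
  then have "int (j * ((j - 1) choose k)) = int ((j - k) * (j choose k))" by simp
  then show ?thesis using True by (simp add: of_nat_diff)
next
  case False then show ?thesis by (simp add: binomial_eq_0)
qed

lemma ident:
  fixes N j k :: nat
  defines "u \<equiv> (if 0 < k then int (j choose (k - 1)) else 0)"
  shows "int (j choose k) * (int N ^ 2 - 1 - tt N k) + int (j choose (k+1)) * aa N (k+1) + u * aa N k
    = tt N j * int (j choose k) + aa N (j+1) * int ((j+1) choose k)
      + (if 0 < j then aa N j * int ((j-1) choose k) else 0)"
proof -
  have h1: "(int k+1)*int (j choose (k+1)) = (int j - int k) * int (j choose k)"
    using F1[of k j] by (simp add: algebra_simps)
  have h2: "int j * int ((j - 1) choose k) = (int j - int k) * int (j choose k)" by (rule F2)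
  have h3: "int ((j+1) choose k) = int (j choose k) + u"
    unfolding u_def by (cases k) auto
  have h4: "int k * int (j choose k) = (int j + 1 - int k) * u"
  proof (cases k)
    case 0 then show ?thesis by (simp add: u_def)
  next
    case (Suc m)
    then show ?thesis using F1[of m j] by (simp add: u_def algebra_simps)
  qed
  have "(if 0 < j then aa N j * int ((j-1) choose k) else 0) = aa N j * int ((j-1) choose k)"
    by (simp add: aa_def)
  then show ?thesis
    using alg[OF h1 h2 h3 h4, of "int N"] by (simp add: aa_def tt_def algebra_simps)
qed


lemma aa_last: "k < N \<Longrightarrow> \<not> k + 1 < N \<Longrightarrow> aa N (k+1) = 0"
proof -
  assume "k < N" "\<not> k + 1 < N"
  then have "k + 1 = N" by simp
  then show ?thesis by (simp add: aa_def)
qed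

lemma Psi_carrier: "Psi N \<in> carrier_mat N N" by (simp add: Psi_def)
lemma Lambda_carrier: "Lambda N \<in> carrier_mat N N" by (simp add: Lambda_def)
lemma Jmat_carrier: "Jmat N \<in> carrier_mat N N" by (simp add: Jmat_def)
lemma Bmat_carrier: "Bmat N \<in> carrier_mat N N"
  by (simp add: Bmat_def Lambda_def Jmat_def)

lemma dims[simp]: "dim_row (Psi N) = N" "dim_col (Psi N) = N" "dim_row (Bmat N) = N" "dim_col (Bmat N) = N"
  "dim_row (Jmat N) = N" "dim_col (Jmat N) = N" "dim_row (Lambda N) = N" "dim_col (Lambda N) = N"
  using Psi_carrier Bmat_carrier Jmat_carrier by (auto simp: Lambda_def)

lemma Lam_left:
  assumes "X \<in> carrier_mat N N" "i < N" "k < N"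
  shows "(Lambda N * X) $$ (i,k) = (-1)^i * X $$ (i,k)"
proof -
  have "(Lambda N * X) $$ (i,k) = (\<Sum>l\<in>{0..<N}. (if i = l then (-1)^i else 0) * X $$ (l,k))"
    using assms by (simp add: Lambda_def scalar_prod_def)
  also have "\<dots> = (\<Sum>l\<in>{0..<N}. (if l = i then (-1)^i * X $$ (l,k) else 0))"
    by (rule sum.cong) auto
  finally show ?thesis using assms by simp
qed

lemma Lam_right:
  assumes "X \<in> carrier_mat N N" "i < N" "k < N"
  shows "(X * Lambda N) $$ (i,k) = X $$ (i,k) * (-1)^k"
proof -
  have "(X * Lambda N) $$ (i,k) = (\<Sum>l\<in>{0..<N}. X $$ (i,l) * (if l = k then (-1)^l else 0))"
    using assms by (simp add: Lambda_def scalar_prod_def)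
  also have "\<dots> = (\<Sum>l\<in>{0..<N}. (if l = k then X $$ (i,l) * (-1)^k else 0))"
    by (rule sum.cong) auto
  finally show ?thesis using assms by simp
qed

lemma Jentry: "l < N \<Longrightarrow> k < N \<Longrightarrow> Jmat N $$ (l,k) = tri (aa N k) (tt N k) (aa N (k+1)) l k"
  by (auto simp: Jmat_def tri_def aa_def tt_def)

lemma Jentry': "l < N \<Longrightarrow> k < N \<Longrightarrow> Jmat N $$ (l,k) = tri (aa N l) (tt N l) (aa N (l+1)) k l"
  by (auto simp: Jmat_def tri_def aa_def tt_def)

lemma Bentry: "l < N \<Longrightarrow> k < N \<Longrightarrow>
   Bmat N $$ (l,k) = tri (aa N k) (int N ^ 2 - 1 - tt N k) (aa N (k+1)) l k"
proof -
  assume a: "l < N" "k < N"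
  have c: "Lambda N * Jmat N \<in> carrier_mat N N" using Lambda_carrier Jmat_carrier by auto
  have "(Lambda N * Jmat N * Lambda N) $$ (l,k) = (-1)^l * Jmat N $$ (l,k) * (-1)^k"
    using Lam_right[OF c a] Lam_left[OF Jmat_carrier a] by simp
  moreover have "Bmat N $$ (l,k) = - ((Lambda N * Jmat N * Lambda N) $$ (l,k)) + (int N ^ 2 - 1) * (if l = k then 1 else 0)"
    using a c Lambda_carrier by (simp add: Bmat_def)
  ultimately have "Bmat N $$ (l,k) = - ((-1)^l * Jmat N $$ (l,k) * (-1)^k) + (int N ^ 2 - 1) * (if l = k then 1 else 0)"
    by simp
  also have "(-1::int)^l * Jmat N $$ (l,k) * (-1)^k = (-1)^(l+k) * Jmat N $$ (l,k)"
    by (simp add: power_add)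
  finally have e: "Bmat N $$ (l,k) = - ((-1)^(l+k) * Jmat N $$ (l,k)) + (int N ^ 2 - 1) * (if l = k then 1 else 0)" .
  show ?thesis
  proof (cases "l = k")
    case True
    then have "even (l+k)" by simp
    then show ?thesis using e a True by (simp add: Jentry tri_def)
  next
    case False
    show ?thesis
    proof (cases "l = k + 1 \<or> l + 1 = k")
      case True
      then have "odd (l+k)" by auto
      then have e2: "Bmat N $$ (l,k) = Jmat N $$ (l,k)" using e False by simp
      show ?thesis using e2 a False by (simp add: Jentry tri_def)
    next
      case F2: False
      then show ?thesis using e a False F2 by (simp add: Jentry tri_def)
    qed
  qed
qed

lemma PsiB: assumes "j < N" "k < N"
  shows "(Psi N * Bmat N) $$ (j,k) = (Jmat N * Psi N) $$ (j,k)"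
proof -
  have "(Psi N * Bmat N) $$ (j,k) = (\<Sum>l<N. int (j choose l) * tri (aa N k) (int N ^ 2 - 1 - tt N k) (aa N (k+1)) l k)"
    using assms Bmat_carrier by (auto simp: Psi_def scalar_prod_def Bentry atLeast0LessThan intro!: sum.cong)
  also have "\<dots> = int (j choose k) * (int N ^ 2 - 1 - tt N k) + (if k + 1 < N then int (j choose (k+1)) * aa N (k+1) else 0)
     + (if 0 < k then int (j choose (k - 1)) * aa N k else 0)"
    by (rule sum_tri[OF assms(2)])
  also have "\<dots> = int (j choose k) * (int N ^ 2 - 1 - tt N k) + int (j choose (k+1)) * aa N (k+1)
     + (if 0 < k then int (j choose (k - 1)) else 0) * aa N k"
    using assms by (cases "k + 1 < N") (auto simp: aa_last[of k N, simplified])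
  also have "\<dots> = tt N j * int (j choose k) + aa N (j+1) * int ((j+1) choose k)
      + (if 0 < j then aa N j * int ((j-1) choose k) else 0)"
    by (rule ident)
  also have "\<dots> = int (j choose k) * tt N j + (if j + 1 < N then int ((j+1) choose k) * aa N (j+1) else 0)
     + (if 0 < j then int ((j-1) choose k) * aa N j else 0)"
    using assms by (cases "j + 1 < N") (auto simp: aa_last[of j N, simplified])
  also have "\<dots> = (\<Sum>l<N. int (l choose k) * tri (aa N j) (tt N j) (aa N (j+1)) l j)"
    by (rule sum_tri[OF assms(1), symmetric])
  also have "\<dots> = (Jmat N * Psi N) $$ (j,k)"
    using assms Jmat_carrier by (auto simp: Psi_def scalar_prod_def Jentry' atLeast0LessThan mult.commute intro!: sum.cong)
  finally show ?thesis .
qed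

lemma PsiB_eq: "Psi N * Bmat N = Jmat N * Psi N"
  by (rule eq_matI) (use PsiB in auto)

lemma tri_sym: "tri (aa N k) (f k) (aa N (k+1)) l k = tri (aa N l) (f l) (aa N (l+1)) k l"
  unfolding tri_def by auto

lemma B_sym: "transpose_mat (Bmat N) = Bmat N"
proof (rule eq_matI)
  fix i j assume "i < dim_row (Bmat N)" "j < dim_col (Bmat N)"
  then show "transpose_mat (Bmat N) $$ (i,j) = Bmat N $$ (i,j)"
    using tri_sym[of N i "\<lambda>k. int N ^ 2 - 1 - tt N k" j] by (simp add: Bentry)
qed auto

lemma J_sym: "transpose_mat (Jmat N) = Jmat N"
proof (rule eq_matI)
  fix i j assume "i < dim_row (Jmat N)" "j < dim_col (Jmat N)"
  then show "transpose_mat (Jmat N) $$ (i,j) = Jmat N $$ (i,j)"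
    using tri_sym[of N i "tt N" j] by (simp add: Jentry)
qed auto

theorem mainTheorem7:
  fixes N :: nat
  assumes "N \<ge> 1"
  shows "Bmat N * Smat N = Smat N * Bmat N"
proof -
  let ?P = "Psi N" and ?B = "Bmat N" and ?J = "Jmat N"
  have P: "?P \<in> carrier_mat N N" and B: "?B \<in> carrier_mat N N" and J: "?J \<in> carrier_mat N N"
    using Psi_carrier Bmat_carrier Jmat_carrier by auto
  have PT: "transpose_mat ?P \<in> carrier_mat N N" using P by simp
  have "?B * Smat N = (?B * transpose_mat ?P) * ?P"
    unfolding Smat_def using P B PT by simp
  also have "?B * transpose_mat ?P = transpose_mat (?P * ?B)"
    using transpose_mult[OF P B] B_sym by simp
  also have "\<dots> = transpose_mat (?J * ?P)" by (simp add: PsiB_eq)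
  also have "\<dots> = transpose_mat ?P * ?J"
    using transpose_mult[OF J P] J_sym by simp
  finally have 1: "?B * Smat N = transpose_mat ?P * ?J * ?P" .
  have "Smat N * ?B = transpose_mat ?P * (?P * ?B)"
    unfolding Smat_def using P B PT by simp
  also have "\<dots> = transpose_mat ?P * ?J * ?P"
    using PT J P by (simp add: PsiB_eq)
  finally show ?thesis using 1 by simp
qed

end
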